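(* Let $\alpha,\beta>0$, let $g(n)=\sum_{i=0}^kc_in^i$ with $k\ge0$ and $c_k\ne0$, let $x$ satisfy $x(n)=\alpha\,x(\lfloor n/2\rfloor)+\beta\,x(\lceil n/2\rceil)+g(n)$ for $n\ge2$ with given $x(1)$, set $x(0)\coloneqq0$, $h(n)\coloneqq x(n+1)-x(n)$, $d_0\coloneqq(1-\beta)x(1)-g(1)+g(0)$, $d_1\coloneqq g(1)-(1-\beta)x(1)$. For $0\le i,j<k$ put \[b_{0j}=\sum_{i=j+1}^k\binom ij2^jc_i,\quad b_{1j}=\sum_{i=j+1}^k\binom ij(2^i-2^j)c_i,\quad a_{0ij}=[j=i]2^i,\quad a_{1ij}=\binom ij2^j,\] and for $r\in\{0,1\}$ let $b_r=(b_{r(k-1)},\dots,b_{r0})$ (a row vector), $\widetilde A_r=(a_{rij})_{i=k-1,\dots,0;\ j=k-1,\dots,0}$ (a $k\times k$ matrix with rows and columns indexed in decreasing order), $\mu_0=\beta$, $\mu_1=\alpha$, and \[A_r=\begin{pmatrix}\mu_r&b_r&d_r\\0&\widetilde A_r&0\\0&0&[r=0]\end{pmatrix}\in\mathbb{C}^{(k+2)\times(k+2)}.\] Let $u=(1,0,\dots,0)\in\mathbb{C}^{1\times(k+2)}$ and $w=(x(1),0,\dots,0,1,1)^\top$ if $k\ge1$, $w=(x(1),1)^\top$ if $k=0$. Then $(u,(A_0,A_1),w)$ is a linear representation of the $2$-regular sequence $h$, with associated right vector-valued sequence $n\mapsto(h(n),n^{k-1},\dots,n,1,\delta_0(n))^\top$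 where $\delta_0(n)=[n=0]$. If moreover $d_0=d_1=0$, then removing the last column of $u$, the last row and column of $A_0$ and $A_1$, and the last row of $w$ also yields a linear representation of $h$.
   Context: A sequence $x\in\mathbb{C}^{\mathbb{N}_0}$ is $q$-regular if there are $D\ge0$, $D\times D$ complex matrices $A_0,\dots,A_{q-1}$, $u\in\mathbb{C}^{1\times D}$ and $v\in(\mathbb{C}^{D\times1})^{\mathbb{N}_0}$ with $x(n)=uv(n)$ and $v(qn+r)=A_rv(n)$ for all $0\le r<q$, $n\ge0$; $(u,A,v(0))$ is a linear representation and $v$ the associated right vector-valued sequence. Iverson's bracket: $[S]=1$ if $S$ is true and $0$ otherwise; $\binom ij=0$ for $j>i$. *)

theory Defs
  imports "Jordan_Normal_Form.Matrix"
begin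

text \<open>Linear representation of a q-regular sequence (Jordan_Normal_Form vectors/matrices).
  The row vector u is a vector of dimension D; u v(n) is the (bilinear) scalar product.\<close>
definition linear_representation ::
  "nat \<Rightarrow> nat \<Rightarrow> complex vec \<Rightarrow> (nat \<Rightarrow> complex mat) \<Rightarrow> complex vec \<Rightarrow> (nat \<Rightarrow> complex) \<Rightarrow> bool" where
  "linear_representation q D u A w s \<longleftrightarrow>
     u \<in> carrier_vec D \<and> w \<in> carrier_vec D \<and> (\<forall>r<q. A r \<in> carrier_mat D D) \<and>
     (\<exists>v. v 0 = w \<and> (\<forall>n. v n \<in> carrier_vec D) \<and>
          (\<forall>r<q. \<forall>n. v (q * n + r) = A r *\<^sub>v v n) \<and> (\<forall>n. s n = u \<bullet> v n))"

definition linear_representation_with ::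
  "nat \<Rightarrow> nat \<Rightarrow> complex vec \<Rightarrow> (nat \<Rightarrow> complex mat) \<Rightarrow> complex vec \<Rightarrow> (nat \<Rightarrow> complex vec) \<Rightarrow> (nat \<Rightarrow> complex) \<Rightarrow> bool" where
  "linear_representation_with q D u A w v s \<longleftrightarrow>
     u \<in> carrier_vec D \<and> w \<in> carrier_vec D \<and> (\<forall>r<q. A r \<in> carrier_mat D D) \<and>
     v 0 = w \<and> (\<forall>n. v n \<in> carrier_vec D) \<and>
     (\<forall>r<q. \<forall>n. v (q * n + r) = A r *\<^sub>v v n) \<and> (\<forall>n. s n = u \<bullet> v n)"

definition iv :: "bool \<Rightarrow> complex" where "iv P = (if P then 1 else 0)"

definition gpol :: "(nat \<Rightarrow> complex) \<Rightarrow> nat \<Rightarrow> nat \<Rightarrow> complex" where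
  "gpol c k n = (\<Sum>i\<le>k. c i * of_nat n ^ i)"

definition bco :: "(nat \<Rightarrow> complex) \<Rightarrow> nat \<Rightarrow> nat \<Rightarrow> nat \<Rightarrow> complex" where
  "bco c k r j = (if r = 0 then (\<Sum>i\<in>{j+1..k}. of_nat (i choose j) * 2 ^ j * c i)
                  else (\<Sum>i\<in>{j+1..k}. of_nat (i choose j) * (2 ^ i - 2 ^ j) * c i))"

definition aco :: "nat \<Rightarrow> nat \<Rightarrow> nat \<Rightarrow> complex" where
  "aco r i j = (if r = 0 then iv (j = i) * 2 ^ i else of_nat (i choose j) * 2 ^ j)"

definition dco :: "real \<Rightarrow> (nat \<Rightarrow> complex) \<Rightarrow> nat \<Rightarrow> complex \<Rightarrow> nat \<Rightarrow> complex" where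
  "dco \<beta> c k x1 r = (if r = 0 then (1 - of_real \<beta>) * x1 - gpol c k 1 + gpol c k 0
                     else gpol c k 1 - (1 - of_real \<beta>) * x1)"

definition mu :: "real \<Rightarrow> real \<Rightarrow> nat \<Rightarrow> complex" where
  "mu \<alpha> \<beta> r = (if r = 0 then of_real \<beta> else of_real \<alpha>)"

text \<open>The (k+2)x(k+2) matrix A_r. Index 0: the h-component; index p (1<=p<=k):
  corresponds to j = k - p (decreasing order k-1,...,0); index k+1: the delta_0 component.\<close>
definition Amat :: "real \<Rightarrow> real \<Rightarrow> (nat \<Rightarrow> complex) \<Rightarrow> nat \<Rightarrow> complex \<Rightarrow> nat \<Rightarrow> complex mat" where
  "Amat \<alpha> \<beta> c k x1 r = mat (k+2) (k+2) (\<lambda>(p,q).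
     if p = 0 then (if q = 0 then mu \<alpha> \<beta> r else if q \<le> k then bco c k r (k - q) else dco \<beta> c k x1 r)
     else if p \<le> k then (if 1 \<le> q \<and> q \<le> k then aco r (k - p) (k - q) else 0)
     else (if q = k + 1 then iv (r = 0) else 0))"

definition uvec :: "nat \<Rightarrow> complex vec" where
  "uvec k = vec (k+2) (\<lambda>p. iv (p = 0))"

definition wvec :: "nat \<Rightarrow> complex \<Rightarrow> complex vec" where
  "wvec k x1 = vec (k+2) (\<lambda>p. if p = 0 then x1 else if p < k then 0 else 1)"

definition Vseq :: "nat \<Rightarrow> (nat \<Rightarrow> complex) \<Rightarrow> nat \<Rightarrow> complex vec" where
  "Vseq k h n = vec (k+2) (\<lambda>p. if p = 0 then h n else if p \<le> k then of_nat n ^ (k - p) else iv (n = 0))"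

definition drop_last_vec :: "complex vec \<Rightarrow> complex vec" where
  "drop_last_vec v = vec (dim_vec v - 1) (\<lambda>i. v $ i)"

definition drop_last_mat :: "complex mat \<Rightarrow> complex mat" where
  "drop_last_mat M = mat (dim_row M - 1) (dim_col M - 1) (\<lambda>(i,j). M $$ (i,j))"

end

theory Submission
  imports Defs
begin

lemma sum_split3:
  fixes f :: "nat \<Rightarrow> 'a::comm_monoid_add"
  shows "(\<Sum>q<k+2. f q) = f 0 + (\<Sum>j<k. f (k-j)) + f (k+1)"
proof -
  have "(\<Sum>q<k+2. f q) = (\<Sum>q<k+1. f q) + f (k+1)" by simp
  also have "(\<Sum>q<k+1. f q) = f 0 + (\<Sum>q<k. f (Suc q))"
    using sum.lessThan_Suc_shift[of f k] by simp
  also have "(\<Sum>q<k. f (Suc q)) = (\<Sum>j<k. f (k-j))"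
    by (rule sum.reindex_bij_witness[where i="\<lambda>j. k - Suc j" and j="\<lambda>j. k - Suc j"]) auto
  finally show ?thesis by simp
qed

lemma binom_2n1:
  "(2 * of_nat n + 1 :: complex) ^ i = (\<Sum>j\<le>i. of_nat (i choose j) * 2^j * of_nat n ^ j)"
  by (subst binomial_ring) (simp add: power_mult_distrib mult.assoc)

lemma diff1:
  "(2 * of_nat n + 1 :: complex) ^ i - (2 * of_nat n) ^ i = (\<Sum>j<i. of_nat (i choose j) * 2^j * of_nat n ^ j)"
proof -
  have "(\<Sum>j\<le>i. of_nat (i choose j) * 2^j * (of_nat n::complex) ^ j) = (\<Sum>j<i. of_nat (i choose j) * 2^j * of_nat n ^ j) + 2^i * of_nat n ^ i"
    by (simp add: lessThan_Suc_atMost[symmetric])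
  then show ?thesis by (simp add: binom_2n1 power_mult_distrib)
qed

lemma diff2:
  "(2 * of_nat n + 2 :: complex) ^ i - (2 * of_nat n + 1) ^ i = (\<Sum>j<i. of_nat (i choose j) * (2^i - 2^j) * of_nat n ^ j)"
proof -
  have a: "(2 * of_nat n + 2 :: complex) ^ i = (\<Sum>j\<le>i. of_nat (i choose j) * 2^i * of_nat n ^ j)"
  proof -
    have "(2 * of_nat n + 2 :: complex) ^ i = 2^i * (of_nat n + 1)^i" by (simp add: power_mult_distrib[symmetric] algebra_simps)
    also have "\<dots> = (\<Sum>j\<le>i. of_nat (i choose j) * 2^i * of_nat n ^ j)"
      by (subst binomial_ring) (simp add: sum_distrib_left algebra_simps)
    finally show ?thesis .
  qed
  have "(2 * of_nat n + 2 :: complex) ^ i - (2 * of_nat n + 1) ^ i = (\<Sum>j\<le>i. of_nat (i choose j) * (2^i - 2^j) * of_nat n ^ j)"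
    unfolding a binom_2n1 by (simp add: sum_subtractf[symmetric] algebra_simps)
  also have "\<dots> = (\<Sum>j<i. of_nat (i choose j) * (2^i - 2^j) * of_nat n ^ j)"
    by (simp add: lessThan_Suc_atMost[symmetric])
  finally show ?thesis .
qed

lemma gdiff0: "gpol c k (2*n+1) - gpol c k (2*n) = (\<Sum>j<k. bco c k 0 j * of_nat n ^ j)"
proof -
  have "gpol c k (2*n+1) - gpol c k (2*n) = (\<Sum>i\<le>k. c i * ((2 * of_nat n + 1) ^ i - (2 * of_nat n) ^ i))"
    by (simp add: gpol_def sum_subtractf[symmetric] algebra_simps)
  also have "\<dots> = (\<Sum>i\<le>k. \<Sum>j<i. c i * (of_nat (i choose j) * 2^j * of_nat n ^ j))"
    unfolding diff1 by (simp add: sum_distrib_left)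
  also have "\<dots> = (\<Sum>j<k. \<Sum>i\<in>{Suc j..k}. c i * (of_nat (i choose j) * 2^j * of_nat n ^ j))"
    by (rule sum.nested_swap')
  also have "\<dots> = (\<Sum>j<k. bco c k 0 j * of_nat n ^ j)"
    by (intro sum.cong refl) (simp add: bco_def sum_distrib_left sum_distrib_right mult_ac)
  finally show ?thesis .
qed

lemma gdiff1: "gpol c k (2*n+2) - gpol c k (2*n+1) = (\<Sum>j<k. bco c k 1 j * of_nat n ^ j)"
proof -
  have "gpol c k (2*n+2) - gpol c k (2*n+1) = (\<Sum>i\<le>k. c i * ((2 * of_nat n + 2) ^ i - (2 * of_nat n + 1) ^ i))"
    by (simp add: gpol_def sum_subtractf[symmetric] algebra_simps)
  also have "\<dots> = (\<Sum>i\<le>k. \<Sum>j<i. c i * (of_nat (i choose j) * (2^i - 2^j) * of_nat n ^ j))"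
    unfolding diff2 by (simp add: sum_distrib_left)
  also have "\<dots> = (\<Sum>j<k. \<Sum>i\<in>{Suc j..k}. c i * (of_nat (i choose j) * (2^i - 2^j) * of_nat n ^ j))"
    by (rule sum.nested_swap')
  also have "\<dots> = (\<Sum>j<k. bco c k 1 j * of_nat n ^ j)"
    by (intro sum.cong refl) (simp add: bco_def sum_distrib_left sum_distrib_right mult_ac)
  finally show ?thesis .
qed

lemma mv_comp:
  assumes "p < k+2"
  shows "(Amat a b c k x1 r *\<^sub>v Vseq k h n) $ p = (\<Sum>q<k+2. Amat a b c k x1 r $$ (p,q) * Vseq k h n $ q)"
  using assms by (simp add: Amat_def Vseq_def scalar_prod_def atLeast0LessThan)

lemma comp0:
  "(Amat a b c k x1 r *\<^sub>v Vseq k h n) $ 0 = mu a b r * h n + (\<Sum>j<k. bco c k r j * of_nat n ^ j) + dco b c k x1 r * iv (n = 0)"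
proof -
  have "(\<Sum>j<k. Amat a b c k x1 r $$ (0, k-j) * Vseq k h n $ (k-j)) = (\<Sum>j<k. bco c k r j * of_nat n ^ j)"
    by (intro sum.cong refl) (auto simp: Amat_def Vseq_def)
  note eq = this
  show ?thesis
    by (subst mv_comp, simp, subst sum_split3, subst eq) (simp add: Amat_def Vseq_def)
qed

lemma compMid:
  assumes "1 \<le> p" "p \<le> k"
  shows "(Amat a b c k x1 r *\<^sub>v Vseq k h n) $ p = (\<Sum>j<k. aco r (k-p) j * of_nat n ^ j)"
proof -
  have "(\<Sum>j<k. Amat a b c k x1 r $$ (p, k-j) * Vseq k h n $ (k-j)) = (\<Sum>j<k. aco r (k-p) j * of_nat n ^ j)"
    by (intro sum.cong refl) (use assms in \<open>auto simp: Amat_def Vseq_def\<close>)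
  note eq = this
  show ?thesis using assms
    by (subst mv_comp, simp, subst sum_split3, subst eq) (simp add: Amat_def Vseq_def)
qed

lemma compLast:
  "(Amat a b c k x1 r *\<^sub>v Vseq k h n) $ (k+1) = iv (r = 0) * iv (n = 0)"
proof -
  have "(\<Sum>j<k. Amat a b c k x1 r $$ (k+1, k-j) * Vseq k h n $ (k-j)) = 0"
    by (intro sum.neutral) (auto simp: Amat_def Vseq_def)
  note eq = this
  show ?thesis
    by (subst mv_comp, simp, subst sum_split3, subst eq) (simp add: Amat_def Vseq_def)
qed

lemma iv_sum: "(\<Sum>i\<in>{0..<Suc m}. iv (i = 0) * f i) = (f 0 :: complex)"
  by (induct m) (auto simp: iv_def)

lemma drop_last_mult:
  assumes M: "M \<in> carrier_mat (Suc m) (Suc m)" and v: "v \<in> carrier_vec (Suc m)"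
    and z: "\<And>i. i < m \<Longrightarrow> M $$ (i, m) * v $ m = 0"
  shows "drop_last_vec (M *\<^sub>v v) = drop_last_mat M *\<^sub>v drop_last_vec v"
proof (rule eq_vecI)
  show "dim_vec (drop_last_vec (M *\<^sub>v v)) = dim_vec (drop_last_mat M *\<^sub>v drop_last_vec v)"
    using M by (simp add: drop_last_vec_def drop_last_mat_def)
  fix i assume "i < dim_vec (drop_last_mat M *\<^sub>v drop_last_vec v)"
  then have i: "i < m" using M by (simp add: drop_last_mat_def)
  have "drop_last_vec (M *\<^sub>v v) $ i = (\<Sum>j\<in>{0..<Suc m}. M $$ (i,j) * v $ j)"
    using M v i by (simp add: drop_last_vec_def scalar_prod_def)
  also have "\<dots> = (\<Sum>j\<in>{0..<m}. M $$ (i,j) * v $ j)" using z[OF i] by simp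
  also have "\<dots> = (drop_last_mat M *\<^sub>v drop_last_vec v) $ i"
    using M v i by (simp add: drop_last_vec_def drop_last_mat_def scalar_prod_def)
  finally show "drop_last_vec (M *\<^sub>v v) $ i = (drop_last_mat M *\<^sub>v drop_last_vec v) $ i" .
qed

theorem mainTheorem7:
  fixes \<alpha> \<beta> :: real and c :: "nat \<Rightarrow> complex" and k :: nat and x :: "nat \<Rightarrow> complex"
  assumes "\<alpha> > 0" and "\<beta> > 0" and "c k \<noteq> 0"
    and "x 0 = 0"
    and "\<And>n. n \<ge> 2 \<Longrightarrow> x n = of_real \<alpha> * x (n div 2) + of_real \<beta> * x ((n + 1) div 2) + gpol c k n"
  shows "linear_representation_with 2 (k+2) (uvec k) (Amat \<alpha> \<beta> c k (x 1)) (wvec k (x 1))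
           (Vseq k (\<lambda>n. x (n+1) - x n)) (\<lambda>n. x (n+1) - x n)
       \<and> (dco \<beta> c k (x 1) 0 = 0 \<and> dco \<beta> c k (x 1) 1 = 0 \<longrightarrow>
           linear_representation 2 (k+1) (drop_last_vec (uvec k))
             (\<lambda>r. drop_last_mat (Amat \<alpha> \<beta> c k (x 1) r)) (drop_last_vec (wvec k (x 1)))
             (\<lambda>n. x (n+1) - x n))"
proof -
  note rec = assms(5)
  define h where "h = (\<lambda>n. x (n+1) - x n)"
  define A where "A = Amat \<alpha> \<beta> c k (x 1)"
  define V where "V = Vseq k h"
  let ?g = "gpol c k"
  have r_even: "x (2*n) = of_real \<alpha> * x n + of_real \<beta> * x n + ?g (2*n)" if "n \<ge> 1" for n
    using rec[of "2*n"] that by simp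
  have r_odd: "x (2*n+1) = of_real \<alpha> * x n + of_real \<beta> * x (n+1) + ?g (2*n+1)" if "n \<ge> 1" for n
    using rec[of "2*n+1"] that by simp
  have r_odd2: "x (2*n+2) = of_real \<alpha> * x (n+1) + of_real \<beta> * x (n+1) + ?g (2*n+2)" for n
    using rec[of "2*n+2"] by simp
  have hA: "h (2*n) = of_real \<beta> * h n + (?g (2*n+1) - ?g (2*n))" if "n \<ge> 1" for n
    unfolding h_def using r_even[OF that] r_odd[OF that] by (simp add: algebra_simps)
  have hB: "h (2*n+1) = of_real \<alpha> * h n + (?g (2*n+2) - ?g (2*n+1))" if "n \<ge> 1" for n
    unfolding h_def using r_odd2[of n] r_odd[OF that] by (simp add: algebra_simps)
  have h0: "h 0 = x 1" using assms(4) by (simp add: h_def)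
  have h1: "h 1 = of_real \<alpha> * x 1 + of_real \<beta> * x 1 + ?g 2 - x 1"
    using r_odd2[of 0] by (simp add: h_def numeral_2_eq_2)
  have g00: "(\<Sum>j<k. bco c k 0 j * of_nat 0 ^ j) = ?g 1 - ?g 0" using gdiff0[of c k 0] by simp
  have g10: "(\<Sum>j<k. bco c k 1 j * of_nat 0 ^ j) = ?g 2 - ?g 1" using gdiff1[of c k 0] by (simp only: mult_zero_right add_0)
  have dimA: "A r \<in> carrier_mat (k+2) (k+2)" for r by (simp add: A_def Amat_def)
  have dimV: "V n \<in> carrier_vec (k+2)" for n by (simp add: V_def Vseq_def)
  have cases_p: "p = 0 \<or> (1 \<le> p \<and> p \<le> k) \<or> p = k+1" if "p < k+2" for p using that by auto
  have mid0: "(\<Sum>j<k. aco 0 i j * of_nat n ^ j) = 2^i * of_nat n ^ i" if "i < k" for i n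
  proof -
    have "(\<Sum>j<k. aco 0 i j * of_nat n ^ j) = (\<Sum>j<k. if j = i then 2^i * of_nat n ^ i else 0)"
      by (intro sum.cong refl) (simp add: aco_def iv_def)
    then show ?thesis using that by simp
  qed
  have mid1: "(\<Sum>j<k. aco 1 i j * of_nat n ^ j) = (2 * of_nat n + 1) ^ i" if "i < k" for i n
  proof -
    have "(\<Sum>j<k. aco 1 i j * of_nat n ^ j) = (\<Sum>j\<le>i. aco 1 i j * of_nat n ^ j)"
      by (rule sum.mono_neutral_right) (use that in \<open>auto simp: aco_def\<close>)
    then show ?thesis by (simp add: binom_2n1 aco_def)
  qed
  have Vh: "V m $ 0 = h m" for m by (simp add: V_def Vseq_def)
  have step0: "V (2*n) = A 0 *\<^sub>v V n" for n
  proof (rule eq_vecI)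
    show "dim_vec (V (2*n)) = dim_vec (A 0 *\<^sub>v V n)" by (simp add: A_def Amat_def V_def Vseq_def)
    fix p assume "p < dim_vec (A 0 *\<^sub>v V n)"
    then have p: "p < k+2" by (simp add: A_def Amat_def)
    from cases_p[OF p] show "V (2*n) $ p = (A 0 *\<^sub>v V n) $ p"
    proof (elim disjE)
      assume "p = 0"
      have e: "(A 0 *\<^sub>v V n) $ 0 = mu \<alpha> \<beta> 0 * h n + (\<Sum>j<k. bco c k 0 j * of_nat n ^ j) + dco \<beta> c k (x 1) 0 * iv (n = 0)"
        unfolding A_def V_def by (rule comp0)
      show ?thesis
      proof (cases "n = 0")
        case True
        have S: "(\<Sum>j<k. bco c k 0 j * of_nat n ^ j) = (\<Sum>j<k. bco c k 0 j * of_nat 0 ^ j)"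
          unfolding True ..
        show ?thesis unfolding \<open>p = 0\<close> e Vh S g00 using True h0 h1
          by (simp add: dco_def mu_def iv_def algebra_simps)
      next
        case False
        then have n1: "n \<ge> 1" by simp
        show ?thesis unfolding \<open>p = 0\<close> e Vh gdiff0[symmetric] hA[OF n1] using False
          by (simp add: mu_def iv_def)
      qed
    next
      assume "1 \<le> p \<and> p \<le> k"
      then show ?thesis
        unfolding A_def V_def by (subst compMid) (auto simp: Vseq_def mid0 power_mult_distrib)
    next
      assume "p = k+1"
      then show ?thesis unfolding A_def V_def by (simp only: compLast) (simp add: Vseq_def iv_def)
    qed
  qed
  have step1: "V (2*n+1) = A 1 *\<^sub>v V n" for n
  proof (rule eq_vecI)
    show "dim_vec (V (2*n+1)) = dim_vec (A 1 *\<^sub>v V n)" by (simp add: A_def Amat_def V_def Vseq_def)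
    fix p assume "p < dim_vec (A 1 *\<^sub>v V n)"
    then have p: "p < k+2" by (simp add: A_def Amat_def)
    from cases_p[OF p] show "V (2*n+1) $ p = (A 1 *\<^sub>v V n) $ p"
    proof (elim disjE)
      assume "p = 0"
      have e: "(A 1 *\<^sub>v V n) $ 0 = mu \<alpha> \<beta> 1 * h n + (\<Sum>j<k. bco c k 1 j * of_nat n ^ j) + dco \<beta> c k (x 1) 1 * iv (n = 0)"
        unfolding A_def V_def by (rule comp0)
      show ?thesis
      proof (cases "n = 0")
        case True
        have S: "(\<Sum>j<k. bco c k 1 j * of_nat n ^ j) = (\<Sum>j<k. bco c k 1 j * of_nat 0 ^ j)"
          unfolding True ..
        show ?thesis unfolding \<open>p = 0\<close> e Vh S g10 using True h0 h1
          by (simp add: dco_def mu_def iv_def algebra_simps)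
      next
        case False
        then have n1: "n \<ge> 1" by simp
        show ?thesis unfolding \<open>p = 0\<close> e Vh gdiff1[symmetric] hB[OF n1] using False
          by (simp add: mu_def iv_def)
      qed
    next
      assume "1 \<le> p \<and> p \<le> k"
      note H = this
      have m: "(\<Sum>j<k. aco 1 (k-p) j * of_nat n ^ j) = (2 * of_nat n + 1) ^ (k-p)"
        using H by (intro mid1) auto
      have cm: "(A 1 *\<^sub>v V n) $ p = (\<Sum>j<k. aco 1 (k-p) j * of_nat n ^ j)"
        unfolding A_def V_def using H by (intro compMid) auto
      show ?thesis
        unfolding cm m using H by (simp add: V_def Vseq_def add.commute)
    next
      assume "p = k+1"
      then show ?thesis unfolding A_def V_def by (simp only: compLast) (simp add: Vseq_def iv_def)
    qed
  qed
  have steps: "\<forall>r<2. \<forall>n. V (2 * n + r) = A r *\<^sub>v V n"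
  proof (intro allI impI)
    fix r n :: nat assume "r < 2"
    then have "r = 0 \<or> r = 1" by auto
    then show "V (2 * n + r) = A r *\<^sub>v V n" using step0 step1 by auto
  qed
  have V0: "V 0 = wvec k (x 1)"
    by (rule eq_vecI) (auto simp: V_def Vseq_def wvec_def h0 iv_def)
  have uV: "uvec k \<bullet> V n = h n" for n
    using iv_sum[where m="Suc k" and f="\<lambda>i. V n $ i"] by (simp add: uvec_def V_def Vseq_def scalar_prod_def)
  have part1: "linear_representation_with 2 (k+2) (uvec k) A (wvec k (x 1)) V h"
    unfolding linear_representation_with_def
    using dimA dimV steps V0 uV by (auto simp: uvec_def wvec_def)
  have part2: "linear_representation 2 (k+1) (drop_last_vec (uvec k))
             (\<lambda>r. drop_last_mat (A r)) (drop_last_vec (wvec k (x 1))) h"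
    if d: "dco \<beta> c k (x 1) 0 = 0" "dco \<beta> c k (x 1) 1 = 0"
  proof -
    have z: "A r $$ (i, k+1) * V n $ (k+1) = 0" if "r < 2" "i < k+1" for r i n
      proof - have "r = 0 \<or> r = 1" using that by auto then show ?thesis using that d by (auto simp: A_def Amat_def) qed
    have st: "\<forall>r<2. \<forall>n. drop_last_vec (V (2 * n + r)) = drop_last_mat (A r) *\<^sub>v drop_last_vec (V n)"
    proof (intro allI impI)
      fix r n :: nat assume r: "r < 2"
      show "drop_last_vec (V (2 * n + r)) = drop_last_mat (A r) *\<^sub>v drop_last_vec (V n)"
        unfolding steps[rule_format, OF r]
        by (rule drop_last_mult[where m="k+1"]) (use dimA dimV z[OF r] in auto)
    qed
    have uV': "drop_last_vec (uvec k) \<bullet> drop_last_vec (V n) = h n" for n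
      using iv_sum[where m=k and f="\<lambda>i. V n $ i"]
      by (simp add: uvec_def V_def Vseq_def scalar_prod_def drop_last_vec_def)
    show ?thesis
      unfolding linear_representation_def
      apply (intro conjI)
         apply (simp add: uvec_def drop_last_vec_def)
        apply (simp add: wvec_def drop_last_vec_def)
       apply (simp add: A_def Amat_def drop_last_mat_def)
      apply (rule exI[of _ "\<lambda>n. drop_last_vec (V n)"])
      using st uV' V0 dimV by (auto simp: drop_last_vec_def V_def Vseq_def)
  qed
  show ?thesis using part1 part2 unfolding A_def V_def h_def by blast
qed

end
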